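(* If $(G_1,\sigma_1),\dots,(G_k,\sigma_k)$ are signed graphs, then $\chi_s((G_1,\sigma_1)\,\square\cdots\square\,(G_k,\sigma_k))\le\prod_{i=1}^k\chi_s(G_i,\sigma_i)$.
   Context: A signed graph $(G,\sigma)$ is a simple loopless undirected graph with a signature $\sigma:E(G)\to\{+1,-1\}$. Switching a vertex negates the signs of its incident edges; two signatures are equivalent if one is obtained from the other by switching a set of vertices. A homomorphism of $(G,\sigma)$ to $(H,\pi)$ is a graph homomorphism $\varphi:G\to H$ for which there is a signature $\sigma'$ equivalent to $\sigma$ with $\pi(\varphi(u)\varphi(v))=\sigma'(uv)$ for every edge $uv$; $\chi_s(G,\sigma)$ is the smallest order of a signed graph to which $(G,\sigma)$ admits a homomorphism. The Cartesian product $(G,\sigma)\,\square\,(H,\pi)$ is the signed graph on $G\,\square\,H$ where $(u,v_1)(u,v_2)$ has sign $\pi(v_1v_2)$ and $(u_1,v)(u_2,v)$ has sign $\sigma(u_1u_2)$. *)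

theory Defs
  imports Main
begin

record 'a sgraph =
  verts :: "'a set"
  edges :: "'a set set"
  sgn :: "'a set \<Rightarrow> int"

definition signed_graph :: "('a, 'b) sgraph_scheme \<Rightarrow> bool" where
  "signed_graph G \<longleftrightarrow> finite (verts G)
     \<and> (\<forall>e\<in>edges G. \<exists>u v. u \<noteq> v \<and> u \<in> verts G \<and> v \<in> verts G \<and> e = {u, v})
     \<and> (\<forall>e\<in>edges G. sgn G e = 1 \<or> sgn G e = -1)"

definition switch :: "('a set \<Rightarrow> int) \<Rightarrow> 'a set \<Rightarrow> 'a set \<Rightarrow> int" where
  "switch \<sigma> X e = (if card (e \<inter> X) = 1 then - \<sigma> e else \<sigma> e)"

definition sg_hom :: "'a sgraph \<Rightarrow> 'b sgraph \<Rightarrow> ('a \<Rightarrow> 'b) \<Rightarrow> bool" where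
  "sg_hom G H \<phi> \<longleftrightarrow> (\<forall>v\<in>verts G. \<phi> v \<in> verts H)
     \<and> (\<forall>u v. {u, v} \<in> edges G \<longrightarrow> {\<phi> u, \<phi> v} \<in> edges H)
     \<and> (\<exists>X\<subseteq>verts G. \<forall>u v. {u, v} \<in> edges G \<longrightarrow>
            sgn H {\<phi> u, \<phi> v} = switch (sgn G) X {u, v})"

text \<open>Signed chromatic number: smallest order of a signed graph admitting a
  homomorphism from G (targets taken on vertex type nat, which loses nothing
  for finite graphs).\<close>
definition chi_s :: "'a sgraph \<Rightarrow> nat" where
  "chi_s G = (LEAST n. \<exists>(H :: nat sgraph) \<phi>. signed_graph H \<and> card (verts H) = n \<and> sg_hom G H \<phi>)"

definition cprod :: "'a sgraph list \<Rightarrow> 'a list sgraph" where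
  "cprod Gs = (let
     V = {xs. length xs = length Gs \<and> (\<forall>i<length Gs. xs ! i \<in> verts (Gs ! i))};
     E = {{xs, ys} | xs ys i. xs \<in> V \<and> ys \<in> V \<and> i < length Gs
            \<and> {xs ! i, ys ! i} \<in> edges (Gs ! i)
            \<and> (\<forall>j<length Gs. j \<noteq> i \<longrightarrow> xs ! j = ys ! j)}
   in \<lparr> verts = V, edges = E,
        sgn = (\<lambda>e. if e \<in> E then
                   (THE s. \<exists>xs ys i. e = {xs, ys} \<and> i < length Gs \<and> xs ! i \<noteq> ys ! i
                           \<and> s = sgn (Gs ! i) {xs ! i, ys ! i})
                 else 1) \<rparr>)"

end

theory Submission
  imports Defs
begin

lemma verts_cprod: "verts (cprod Gs) = {xs. length xs = length Gs \<and> (\<forall>i<length Gs. xs ! i \<in> verts (Gs ! i))}"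
  by (simp add: cprod_def Let_def)

lemma edges_cprod: "edges (cprod Gs) = {{xs, ys} | xs ys i. xs \<in> verts (cprod Gs) \<and> ys \<in> verts (cprod Gs) \<and> i < length Gs
            \<and> {xs ! i, ys ! i} \<in> edges (Gs ! i)
            \<and> (\<forall>j<length Gs. j \<noteq> i \<longrightarrow> xs ! j = ys ! j)}"
  by (simp add: cprod_def Let_def)

lemma sgn_cprod:
  assumes "xs \<in> verts (cprod Gs)" "ys \<in> verts (cprod Gs)" "i < length Gs"
    "{xs ! i, ys ! i} \<in> edges (Gs ! i)" "\<forall>j<length Gs. j \<noteq> i \<longrightarrow> xs ! j = ys ! j"
    "xs ! i \<noteq> ys ! i"
  shows "sgn (cprod Gs) {xs, ys} = sgn (Gs ! i) {xs ! i, ys ! i}"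
proof -
  have E: "{xs, ys} \<in> edges (cprod Gs)" unfolding edges_cprod using assms by blast
  have "(THE s. \<exists>xs' ys' i'. {xs, ys} = {xs', ys'} \<and> i' < length Gs \<and> xs' ! i' \<noteq> ys' ! i'
                           \<and> s = sgn (Gs ! i') {xs' ! i', ys' ! i'}) = sgn (Gs ! i) {xs ! i, ys ! i}"
  proof (rule the_equality)
    show "\<exists>xs' ys' i'. {xs, ys} = {xs', ys'} \<and> i' < length Gs \<and> xs' ! i' \<noteq> ys' ! i'
                           \<and> sgn (Gs ! i) {xs ! i, ys ! i} = sgn (Gs ! i') {xs' ! i', ys' ! i'}"
      using assms by blast
  next
    fix s assume "\<exists>xs' ys' i'. {xs, ys} = {xs', ys'} \<and> i' < length Gs \<and> xs' ! i' \<noteq> ys' ! i'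
                           \<and> s = sgn (Gs ! i') {xs' ! i', ys' ! i'}"
    then obtain xs' ys' i' where h: "{xs, ys} = {xs', ys'}" "i' < length Gs" "xs' ! i' \<noteq> ys' ! i'"
      "s = sgn (Gs ! i') {xs' ! i', ys' ! i'}" by blast
    from h(1) have c: "(xs' = xs \<and> ys' = ys) \<or> (xs' = ys \<and> ys' = xs)" by (auto simp: doubleton_eq_iff)
    have "i' = i" using c h(2,3) assms(5) by metis
    then show "s = sgn (Gs ! i) {xs ! i, ys ! i}" using c h(4) by (auto simp: insert_commute)
  qed
  then show ?thesis using E by (simp add: cprod_def Let_def)
qed

lemma sg_edge: "signed_graph G \<Longrightarrow> {a, b} \<in> edges G \<Longrightarrow> a \<noteq> b \<and> a \<in> verts G \<and> b \<in> verts G"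
  unfolding signed_graph_def by (auto simp: doubleton_eq_iff)

lemma cprod_signed:
  assumes "\<forall>i<length Hs. signed_graph (Hs ! i)"
  shows "signed_graph (cprod Hs)"
proof -
  let ?k = "length Hs"
  have sub: "verts (cprod Hs) \<subseteq> {xs. set xs \<subseteq> \<Union> (verts ` set Hs) \<and> length xs = ?k}"
  proof
    fix xs assume "xs \<in> verts (cprod Hs)"
    then have "length xs = ?k" "\<forall>i<?k. xs ! i \<in> verts (Hs ! i)" by (auto simp: verts_cprod)
    have "set xs \<subseteq> \<Union> (verts ` set Hs)"
    proof
      fix x assume "x \<in> set xs"
      then obtain j where j: "j < length xs" "x = xs ! j" by (auto simp: in_set_conv_nth)
      then have "x \<in> verts (Hs ! j)" "Hs ! j \<in> set Hs"
        using \<open>length xs = ?k\<close> \<open>\<forall>i<?k. xs ! i \<in> verts (Hs ! i)\<close> by simp_all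
      then show "x \<in> \<Union> (verts ` set Hs)" by blast
    qed
    then show "xs \<in> {xs. set xs \<subseteq> \<Union> (verts ` set Hs) \<and> length xs = ?k}"
      using \<open>length xs = ?k\<close> by simp
  qed
  have "\<forall>G\<in>set Hs. finite (verts G)"
  proof
    fix G assume "G \<in> set Hs"
    then obtain j where "j < ?k" "G = Hs ! j" by (auto simp: in_set_conv_nth)
    then have "signed_graph (Hs ! j)" using assms by blast
    then show "finite (verts G)" using \<open>G = Hs ! j\<close> by (simp add: signed_graph_def)
  qed
  then have fu: "finite (\<Union> (verts ` set Hs))" by simp
  have fin: "finite (verts (cprod Hs))"
    by (rule finite_subset[OF sub finite_lists_length_eq[OF fu]])
  have ed: "\<forall>e\<in>edges (cprod Hs). \<exists>u v. u \<noteq> v \<and> u \<in> verts (cprod Hs) \<and> v \<in> verts (cprod Hs) \<and> e = {u, v}"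
  proof
    fix e assume "e \<in> edges (cprod Hs)"
    then obtain xs ys i where h: "e = {xs, ys}" "xs \<in> verts (cprod Hs)" "ys \<in> verts (cprod Hs)" "i < ?k"
      "{xs ! i, ys ! i} \<in> edges (Hs ! i)" unfolding edges_cprod by blast
    then have "xs ! i \<noteq> ys ! i" using sg_edge[OF assms[rule_format, OF h(4)] h(5)] by blast
    then have "xs \<noteq> ys" by auto
    then show "\<exists>u v. u \<noteq> v \<and> u \<in> verts (cprod Hs) \<and> v \<in> verts (cprod Hs) \<and> e = {u, v}"
      using h(1-3) by (intro exI[of _ xs] exI[of _ ys]) simp
  qed
  have sg: "\<forall>e\<in>edges (cprod Hs). sgn (cprod Hs) e = 1 \<or> sgn (cprod Hs) e = -1"
  proof
    fix e assume "e \<in> edges (cprod Hs)"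
    then obtain xs ys i where h: "e = {xs, ys}" "xs \<in> verts (cprod Hs)" "ys \<in> verts (cprod Hs)" "i < ?k"
      "{xs ! i, ys ! i} \<in> edges (Hs ! i)" "\<forall>j<length Hs. j \<noteq> i \<longrightarrow> xs ! j = ys ! j"
      unfolding edges_cprod by blast
    then have "xs ! i \<noteq> ys ! i" using sg_edge[OF assms[rule_format, OF h(4)] h(5)] by blast
    then have "sgn (cprod Hs) e = sgn (Hs ! i) {xs ! i, ys ! i}"
      unfolding h(1) by (rule sgn_cprod[OF h(2-6)])
    moreover have "signed_graph (Hs ! i)" using assms h(4) by blast
    then have "sgn (Hs ! i) {xs ! i, ys ! i} = 1 \<or> sgn (Hs ! i) {xs ! i, ys ! i} = -1"
      using h(5) unfolding signed_graph_def by blast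
    ultimately show "sgn (cprod Hs) e = 1 \<or> sgn (cprod Hs) e = -1" by simp
  qed
  show ?thesis unfolding signed_graph_def using fin ed sg by (intro conjI)
qed

lemma card_lists:
  "card {xs. length xs = k \<and> (\<forall>i<k. xs ! i \<in> A i)} = (\<Prod>i<k. card (A i))"
proof (induction k arbitrary: A)
  case 0
  then show ?case by simp
next
  case (Suc k)
  have "bij_betw (\<lambda>(x, ys). x # ys) (A 0 \<times> {ys. length ys = k \<and> (\<forall>i<k. ys ! i \<in> A (Suc i))})
         {xs. length xs = Suc k \<and> (\<forall>i<Suc k. xs ! i \<in> A i)}"
  proof (rule bij_betwI')
    show "\<And>x y. x \<in> A 0 \<times> {ys. length ys = k \<and> (\<forall>i<k. ys ! i \<in> A (Suc i))} \<Longrightarrow>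
           y \<in> A 0 \<times> {ys. length ys = k \<and> (\<forall>i<k. ys ! i \<in> A (Suc i))} \<Longrightarrow>
           ((case x of (x, ys) \<Rightarrow> x # ys) = (case y of (x, ys) \<Rightarrow> x # ys)) = (x = y)"
      by auto
    show "\<And>x. x \<in> A 0 \<times> {ys. length ys = k \<and> (\<forall>i<k. ys ! i \<in> A (Suc i))} \<Longrightarrow>
         (case x of (x, ys) \<Rightarrow> x # ys) \<in> {xs. length xs = Suc k \<and> (\<forall>i<Suc k. xs ! i \<in> A i)}"
      by (auto simp: less_Suc_eq_0_disj)
    show "\<And>y. y \<in> {xs. length xs = Suc k \<and> (\<forall>i<Suc k. xs ! i \<in> A i)} \<Longrightarrow>
         \<exists>x\<in>A 0 \<times> {ys. length ys = k \<and> (\<forall>i<k. ys ! i \<in> A (Suc i))}. y = (case x of (x, ys) \<Rightarrow> x # ys)"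
    proof -
      fix y assume y: "y \<in> {xs. length xs = Suc k \<and> (\<forall>i<Suc k. xs ! i \<in> A i)}"
      then obtain a ys where "y = a # ys" by (cases y) auto
      then show "\<exists>x\<in>A 0 \<times> {ys. length ys = k \<and> (\<forall>i<k. ys ! i \<in> A (Suc i))}. y = (case x of (x, ys) \<Rightarrow> x # ys)"
        using y by (intro bexI[of _ "(a, ys)"]) auto
    qed
  qed
  then have "card {xs. length xs = Suc k \<and> (\<forall>i<Suc k. xs ! i \<in> A i)}
     = card (A 0 \<times> {ys. length ys = k \<and> (\<forall>i<k. ys ! i \<in> A (Suc i))})"
    by (simp add: bij_betw_same_card)
  also have "\<dots> = card (A 0) * (\<Prod>i<k. card (A (Suc i)))"
    using Suc[of "\<lambda>i. A (Suc i)"] by (simp add: card_cartesian_product)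
  also have "\<dots> = (\<Prod>i<Suc k. card (A i))" by (simp only: prod.lessThan_Suc_shift)
  finally show ?case .
qed

lemma transfer_nat:
  assumes "signed_graph H" "sg_hom G H \<phi>"
  shows "\<exists>(H' :: nat sgraph) \<psi>. signed_graph H' \<and> card (verts H') = card (verts H) \<and> sg_hom G H' \<psi>"
proof -
  have "finite (verts H)" using assms(1) by (simp add: signed_graph_def)
  then obtain f :: "_ \<Rightarrow> nat" and n where inj: "inj_on f (verts H)"
    using finite_imp_inj_to_nat_seg by blast
  define H' where "H' = \<lparr> verts = f ` verts H, edges = (\<lambda>e. f ` e) ` edges H,
      sgn = (\<lambda>e. sgn H {x\<in>verts H. f x \<in> e}) \<rparr>"
  have key: "\<And>a b. a \<in> verts H \<Longrightarrow> b \<in> verts H \<Longrightarrow> {x\<in>verts H. f x \<in> {f a, f b}} = {a, b}"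
    using inj by (auto simp: inj_on_eq_iff)
  have sH': "signed_graph H'"
    unfolding signed_graph_def
  proof (intro conjI)
    show "finite (verts H')" using \<open>finite (verts H)\<close> by (simp add: H'_def)
    show "\<forall>e\<in>edges H'. \<exists>u v. u \<noteq> v \<and> u \<in> verts H' \<and> v \<in> verts H' \<and> e = {u, v}"
    proof
      fix e assume "e \<in> edges H'"
      then obtain e0 where "e0 \<in> edges H" "e = f ` e0" unfolding H'_def sgraph.select_convs by blast
      moreover then obtain a b where ab: "a \<noteq> b" "a \<in> verts H" "b \<in> verts H" "e0 = {a, b}"
        using assms(1) unfolding signed_graph_def by blast
      ultimately have "e = {f a, f b}" by simp
      moreover have "f a \<noteq> f b" using inj_on_eq_iff[OF inj ab(2) ab(3)] ab(1) by simp
      moreover have "f a \<in> verts H'" "f b \<in> verts H'" using ab by (simp_all add: H'_def)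
      ultimately show "\<exists>u v. u \<noteq> v \<and> u \<in> verts H' \<and> v \<in> verts H' \<and> e = {u, v}"
        by (intro exI[of _ "f a"] exI[of _ "f b"]) simp
    qed
    show "\<forall>e\<in>edges H'. sgn H' e = 1 \<or> sgn H' e = - 1"
    proof
      fix e assume "e \<in> edges H'"
      then obtain e0 where "e0 \<in> edges H" "e = f ` e0" unfolding H'_def sgraph.select_convs by blast
      moreover then obtain a b where ab: "a \<noteq> b" "a \<in> verts H" "b \<in> verts H" "e0 = {a, b}"
        using assms(1) unfolding signed_graph_def by blast
      ultimately have "e = {f a, f b}" by simp
      then have "sgn H' e = sgn H {a, b}" using key[OF ab(2,3)] by (simp add: H'_def)
      moreover have "\<forall>e\<in>edges H. sgn H e = 1 \<or> sgn H e = -1"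
        using assms(1) unfolding signed_graph_def by blast
      ultimately show "sgn H' e = 1 \<or> sgn H' e = - 1"
        using \<open>e0 \<in> edges H\<close> ab(4) by simp
    qed
  qed
  have "sg_hom G H' (f \<circ> \<phi>)"
  proof -
    from assms(2) obtain X where X: "X \<subseteq> verts G" "\<forall>u v. {u, v} \<in> edges G \<longrightarrow>
            sgn H {\<phi> u, \<phi> v} = switch (sgn G) X {u, v}" unfolding sg_hom_def by blast
    have "\<forall>u v. {u, v} \<in> edges G \<longrightarrow> sgn H' {(f \<circ> \<phi>) u, (f \<circ> \<phi>) v} = switch (sgn G) X {u, v}"
    proof (intro allI impI)
      fix u v assume uv: "{u, v} \<in> edges G"
      then have "{\<phi> u, \<phi> v} \<in> edges H" using assms(2) unfolding sg_hom_def by blast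
      then have "\<phi> u \<in> verts H" "\<phi> v \<in> verts H" using sg_edge[OF assms(1)] by blast+
      then show "sgn H' {(f \<circ> \<phi>) u, (f \<circ> \<phi>) v} = switch (sgn G) X {u, v}"
        using key X uv by (simp add: H'_def)
    qed
    moreover have "\<forall>v\<in>verts G. (f \<circ> \<phi>) v \<in> verts H'" using assms(2) unfolding sg_hom_def by (simp add: H'_def)
    moreover have "\<forall>u v. {u, v} \<in> edges G \<longrightarrow> {(f \<circ> \<phi>) u, (f \<circ> \<phi>) v} \<in> edges H'"
    proof (intro allI impI)
      fix u v assume uv: "{u, v} \<in> edges G"
      then have "{\<phi> u, \<phi> v} \<in> edges H" using assms(2) unfolding sg_hom_def by blast
      moreover have "{(f \<circ> \<phi>) u, (f \<circ> \<phi>) v} = f ` {\<phi> u, \<phi> v}" by simp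
      ultimately show "{(f \<circ> \<phi>) u, (f \<circ> \<phi>) v} \<in> edges H'"
        unfolding H'_def sgraph.select_convs by (metis imageI)
    qed
    ultimately show ?thesis using X(1) unfolding sg_hom_def by blast
  qed
  moreover have "card (verts H') = card (verts H)" using inj by (simp add: H'_def card_image)
  ultimately show ?thesis using sH' by blast
qed

lemma chi_s_attained:
  assumes "signed_graph G"
  shows "\<exists>(H :: nat sgraph) \<phi>. signed_graph H \<and> card (verts H) = chi_s G \<and> sg_hom G H \<phi>"
proof -
  have "sg_hom G G id" unfolding sg_hom_def switch_def
    by (intro conjI ballI allI impI exI[of _ "{}"]) simp_all
  then have "\<exists>n. \<exists>(H :: nat sgraph) \<phi>. signed_graph H \<and> card (verts H) = n \<and> sg_hom G H \<phi>"
    using transfer_nat[OF assms] by blast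
  then show ?thesis unfolding chi_s_def by (rule LeastI_ex)
qed

lemma card2_iff: "a \<noteq> b \<Longrightarrow> (card ({a, b} \<inter> Y) = 1) = ((a \<in> Y) \<noteq> (b \<in> Y))"
  by (cases "a \<in> Y"; cases "b \<in> Y") auto

lemma cprod_hom:
  assumes len: "length Hs = length Gs"
    and sG: "\<forall>i<length Gs. signed_graph (Gs ! i)"
    and sH: "\<forall>i<length Gs. signed_graph (Hs ! i)"
    and hom: "\<forall>i<length Gs. sg_hom (Gs ! i) (Hs ! i) (\<phi> i)"
  shows "sg_hom (cprod Gs) (cprod Hs) (\<lambda>xs. map (\<lambda>i. \<phi> i (xs ! i)) [0..<length Gs])"
proof -
  let ?k = "length Gs"
  define \<Phi> where "\<Phi> = (\<lambda>xs. map (\<lambda>i. \<phi> i (xs ! i)) [0..<length Gs])"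
  have \<Phi>nth: "\<And>xs i. i < ?k \<Longrightarrow> \<Phi> xs ! i = \<phi> i (xs ! i)" by (simp add: \<Phi>_def)
  have \<Phi>len: "\<And>xs. length (\<Phi> xs) = ?k" by (simp add: \<Phi>_def)
  have V: "\<And>xs. xs \<in> verts (cprod Gs) \<Longrightarrow> \<Phi> xs \<in> verts (cprod Hs)"
    using hom len by (auto simp: verts_cprod \<Phi>nth \<Phi>len sg_hom_def)
  have EH: "\<And>xs ys i. xs \<in> verts (cprod Gs) \<Longrightarrow> ys \<in> verts (cprod Gs) \<Longrightarrow> i < ?k \<Longrightarrow>
     {xs ! i, ys ! i} \<in> edges (Gs ! i) \<Longrightarrow> (\<forall>j<?k. j \<noteq> i \<longrightarrow> xs ! j = ys ! j) \<Longrightarrow>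
     {\<Phi> xs ! i, \<Phi> ys ! i} \<in> edges (Hs ! i) \<and> (\<forall>j<?k. j \<noteq> i \<longrightarrow> \<Phi> xs ! j = \<Phi> ys ! j)
     \<and> {\<Phi> xs, \<Phi> ys} \<in> edges (cprod Hs)"
  proof -
    fix xs ys i assume h: "xs \<in> verts (cprod Gs)" "ys \<in> verts (cprod Gs)" "i < ?k"
      "{xs ! i, ys ! i} \<in> edges (Gs ! i)" "\<forall>j<?k. j \<noteq> i \<longrightarrow> xs ! j = ys ! j"
    have 1: "{\<Phi> xs ! i, \<Phi> ys ! i} \<in> edges (Hs ! i)"
      using hom h(3,4) by (simp add: \<Phi>nth sg_hom_def)
    have 2: "\<forall>j<?k. j \<noteq> i \<longrightarrow> \<Phi> xs ! j = \<Phi> ys ! j" using h(5) by (simp add: \<Phi>nth)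
    have "{\<Phi> xs, \<Phi> ys} \<in> edges (cprod Hs)" unfolding edges_cprod
      using V[OF h(1)] V[OF h(2)] h(3) 1 2 len by auto
    then show "{\<Phi> xs ! i, \<Phi> ys ! i} \<in> edges (Hs ! i) \<and> (\<forall>j<?k. j \<noteq> i \<longrightarrow> \<Phi> xs ! j = \<Phi> ys ! j)
     \<and> {\<Phi> xs, \<Phi> ys} \<in> edges (cprod Hs)" using 1 2 by blast
  qed
  have "\<forall>i<?k. \<exists>X. X \<subseteq> verts (Gs ! i) \<and> (\<forall>u v. {u, v} \<in> edges (Gs ! i) \<longrightarrow>
            sgn (Hs ! i) {\<phi> i u, \<phi> i v} = switch (sgn (Gs ! i)) X {u, v})"
    using hom unfolding sg_hom_def by blast
  then have "\<forall>i. \<exists>X. i < ?k \<longrightarrow> (\<forall>u v. {u, v} \<in> edges (Gs ! i) \<longrightarrow>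
            sgn (Hs ! i) {\<phi> i u, \<phi> i v} = switch (sgn (Gs ! i)) X {u, v})" by blast
  then obtain Xf where Xf0: "\<forall>i. i < ?k \<longrightarrow> (\<forall>u v. {u, v} \<in> edges (Gs ! i) \<longrightarrow>
            sgn (Hs ! i) {\<phi> i u, \<phi> i v} = switch (sgn (Gs ! i)) (Xf i) {u, v})"
    using choice[where Q="\<lambda>i X. i < ?k \<longrightarrow> (\<forall>u v. {u, v} \<in> edges (Gs ! i) \<longrightarrow>
            sgn (Hs ! i) {\<phi> i u, \<phi> i v} = switch (sgn (Gs ! i)) X {u, v})"] by blast
  have Xf: "\<And>i. i < ?k \<Longrightarrow> (\<forall>u v. {u, v} \<in> edges (Gs ! i) \<longrightarrow>
            sgn (Hs ! i) {\<phi> i u, \<phi> i v} = switch (sgn (Gs ! i)) (Xf i) {u, v})"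
    using Xf0 by blast
  define S where "S = (\<lambda>xs. (\<Sum>j<?k. if xs ! j \<in> Xf j then 1 else 0 :: nat))"
  define X where "X = {xs \<in> verts (cprod Gs). odd (S xs)}"
  have sw: "\<forall>u v. {u, v} \<in> edges (cprod Gs) \<longrightarrow>
            sgn (cprod Hs) {\<Phi> u, \<Phi> v} = switch (sgn (cprod Gs)) X {u, v}"
  proof (intro allI impI)
    fix u v assume "{u, v} \<in> edges (cprod Gs)"
    then obtain xs ys i where h: "{u, v} = {xs, ys}" "xs \<in> verts (cprod Gs)" "ys \<in> verts (cprod Gs)" "i < ?k"
      "{xs ! i, ys ! i} \<in> edges (Gs ! i)" "\<forall>j<?k. j \<noteq> i \<longrightarrow> xs ! j = ys ! j"
      unfolding edges_cprod by blast
    have uv: "{\<Phi> u, \<Phi> v} = {\<Phi> xs, \<Phi> ys}" using h(1) by (auto simp: doubleton_eq_iff)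
    have ne: "xs ! i \<noteq> ys ! i" using sg_edge[OF sG[rule_format, OF h(4)] h(5)] by blast
    have e: "{\<Phi> xs ! i, \<Phi> ys ! i} \<in> edges (Hs ! i)" "\<forall>j<?k. j \<noteq> i \<longrightarrow> \<Phi> xs ! j = \<Phi> ys ! j"
      using EH[OF h(2-6)] by blast+
    have neH: "\<Phi> xs ! i \<noteq> \<Phi> ys ! i" using sg_edge[OF sH[rule_format, OF h(4)] e(1)] by blast
    have "sgn (cprod Hs) {\<Phi> xs, \<Phi> ys} = sgn (Hs ! i) {\<Phi> xs ! i, \<Phi> ys ! i}"
      using sgn_cprod[of "\<Phi> xs" Hs "\<Phi> ys" i] V[OF h(2)] V[OF h(3)] h(4) e neH len by simp
    also have "\<dots> = switch (sgn (Gs ! i)) (Xf i) {xs ! i, ys ! i}"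
      using Xf[OF h(4)] h(5) h(4) by (simp add: \<Phi>nth)
    finally have L: "sgn (cprod Hs) {\<Phi> u, \<Phi> v} = switch (sgn (Gs ! i)) (Xf i) {xs ! i, ys ! i}"
      using uv by simp
    have sG': "sgn (cprod Gs) {xs, ys} = sgn (Gs ! i) {xs ! i, ys ! i}"
      using sgn_cprod[OF h(2-6) ne] .
    have nexy: "xs \<noteq> ys" using ne by auto
    have fin: "finite {..<?k}" by simp
    have R: "\<And>g. sum g {..<?k} = g i + sum g ({..<?k} - {i})"
      using sum.remove[OF fin] h(4) by simp
    have Sx: "S xs = (if xs ! i \<in> Xf i then 1 else 0) + (\<Sum>j\<in>{..<?k} - {i}. if xs ! j \<in> Xf j then 1 else 0)"
      unfolding S_def by (subst R) (rule refl)
    have Sy: "S ys = (if ys ! i \<in> Xf i then 1 else 0) + (\<Sum>j\<in>{..<?k} - {i}. if xs ! j \<in> Xf j then 1 else 0)"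
    proof -
      have "(\<Sum>j\<in>{..<?k} - {i}. if ys ! j \<in> Xf j then 1 else 0) = (\<Sum>j\<in>{..<?k} - {i}. if xs ! j \<in> Xf j then (1::nat) else 0)"
        by (rule sum.cong) (use h(6) in auto)
      then show ?thesis unfolding S_def by (subst R) simp
    qed
    have "((xs \<in> X) \<noteq> (ys \<in> X)) = ((xs ! i \<in> Xf i) \<noteq> (ys ! i \<in> Xf i))"
      unfolding X_def using h(2,3) Sx Sy by (cases "xs ! i \<in> Xf i"; cases "ys ! i \<in> Xf i") auto
    then have "switch (sgn (cprod Gs)) X {xs, ys} = switch (sgn (Gs ! i)) (Xf i) {xs ! i, ys ! i}"
      unfolding switch_def using card2_iff[OF nexy] card2_iff[OF ne] sG' by simp
    then show "sgn (cprod Hs) {\<Phi> u, \<Phi> v} = switch (sgn (cprod Gs)) X {u, v}"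
      using L h(1) by simp
  qed
  have ed: "\<forall>u v. {u, v} \<in> edges (cprod Gs) \<longrightarrow> {\<Phi> u, \<Phi> v} \<in> edges (cprod Hs)"
  proof (intro allI impI)
    fix u v assume "{u, v} \<in> edges (cprod Gs)"
    then obtain xs ys i where h: "{u, v} = {xs, ys}" "xs \<in> verts (cprod Gs)" "ys \<in> verts (cprod Gs)" "i < ?k"
      "{xs ! i, ys ! i} \<in> edges (Gs ! i)" "\<forall>j<?k. j \<noteq> i \<longrightarrow> xs ! j = ys ! j"
      unfolding edges_cprod by blast
    have uv: "{\<Phi> u, \<Phi> v} = {\<Phi> xs, \<Phi> ys}" using h(1) by (auto simp: doubleton_eq_iff)
    show "{\<Phi> u, \<Phi> v} \<in> edges (cprod Hs)" using EH[OF h(2-6)] uv by simp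
  qed
  have "X \<subseteq> verts (cprod Gs)" by (auto simp: X_def)
  then show ?thesis using V sw ed unfolding sg_hom_def \<Phi>_def[symmetric] by blast
qed

theorem corollary5p4:
  fixes Gs :: "'a sgraph list"
  assumes "\<forall>G\<in>set Gs. signed_graph G"
  shows "chi_s (cprod Gs) \<le> (\<Prod>i<length Gs. chi_s (Gs ! i))"
proof -
  let ?k = "length Gs"
  have sG: "\<forall>i<?k. signed_graph (Gs ! i)" using assms by simp
  have "\<forall>i<?k. \<exists>(H :: nat sgraph) \<phi>. signed_graph H \<and> card (verts H) = chi_s (Gs ! i) \<and> sg_hom (Gs ! i) H \<phi>"
    using sG chi_s_attained by blast
  then have "\<forall>i. \<exists>p. i < ?k \<longrightarrow> signed_graph (fst p :: nat sgraph) \<and> card (verts (fst p)) = chi_s (Gs ! i)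
      \<and> sg_hom (Gs ! i) (fst p) (snd p)" by simp
  then obtain pf where pf: "\<forall>i. i < ?k \<longrightarrow> signed_graph (fst (pf i) :: nat sgraph) \<and> card (verts (fst (pf i))) = chi_s (Gs ! i)
      \<and> sg_hom (Gs ! i) (fst (pf i)) (snd (pf i))" by (rule choice[THEN exE]) blast
  define Hf where "Hf = (\<lambda>i. fst (pf i))"
  define \<phi>f where "\<phi>f = (\<lambda>i. snd (pf i))"
  have hf: "\<And>i. i < ?k \<Longrightarrow> signed_graph (Hf i :: nat sgraph) \<and> card (verts (Hf i)) = chi_s (Gs ! i)
      \<and> sg_hom (Gs ! i) (Hf i) (\<phi>f i)" using pf by (simp add: Hf_def \<phi>f_def)
  define Hs where "Hs = map Hf [0..<?k]"
  have len: "length Hs = ?k" by (simp add: Hs_def)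
  have Hsn: "\<And>i. i < ?k \<Longrightarrow> Hs ! i = Hf i" by (simp add: Hs_def)
  have hom: "sg_hom (cprod Gs) (cprod Hs) (\<lambda>xs. map (\<lambda>i. \<phi>f i (xs ! i)) [0..<?k])"
    using cprod_hom[OF len sG] hf Hsn by simp
  have sH: "signed_graph (cprod Hs)" by (rule cprod_signed) (simp add: len Hsn hf)
  have "card (verts (cprod Hs)) = (\<Prod>i<?k. card (verts (Hs ! i)))"
    unfolding verts_cprod len by (rule card_lists)
  also have "\<dots> = (\<Prod>i<?k. chi_s (Gs ! i))" using hf Hsn by (auto intro!: prod.cong)
  finally have c: "card (verts (cprod Hs)) = (\<Prod>i<?k. chi_s (Gs ! i))" .
  obtain H' :: "nat sgraph" and \<psi> where h': "signed_graph H'" "card (verts H') = card (verts (cprod Hs))"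
    "sg_hom (cprod Gs) H' \<psi>" using transfer_nat[OF sH hom] by blast
  have "\<exists>(H :: nat sgraph) \<phi>. signed_graph H \<and> card (verts H) = (\<Prod>i<?k. chi_s (Gs ! i))
      \<and> sg_hom (cprod Gs) H \<phi>"
    using h' c by (intro exI[of _ H'] exI[of _ \<psi>]) simp
  then show ?thesis unfolding chi_s_def by (rule Least_le)
qed

end
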